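(* Let $\mathcal X$ be the ternary coalescent started from a finite configuration $\mathbf r=(r_1,\dots,r_N)\in\mathcal S^\downarrow$ with $N=2n+1$, $n\in\mathbb Z_+$, and total mass $M=r_1+\dots+r_N$. Let $T_0=0$, $T_k$ the time of the $k$-th coagulation ($1\le k\le n$), and $\mathcal X'_k=\mathcal X(T_k)$, $0\le k\le n$. Then: (i) The waiting times $\Delta_k=T_k-T_{k-1}$, $k=1,\dots,n$, are independent exponential random variables with respective parameters $\alpha(k)=\frac12(M+N+2-2k)(N+1-2k)(N-2k)$. In particular, the sequences $(T_k)_{0\le k\le n}$ and $(\mathcal X'_k)_{0\le k\le n}$ are independent. (ii) $(\mathcal X'_k)_{0\le k\le n}$ is a Markov chain with transition probabilities $$\mathbb P\big(\mathcal X'_{l+1}=\mathbf s^{i\oplus j\oplus k}\mid \mathcal X'_l=\mathbf s\big)=\frac{s_i+s_j+s_k+3}{\alpha(l+1)},$$ for $0\le l<n$, $1\le i<j<k\le N-2l$, and every $\mathbf s=(s_1,\dots,s_{N-2l})\in\mathcal S^\downarrow$ with $s_1+\dots+s_{N-2l}=M$ and $\mathbb P(\mathcal X'_l=\mathbf s)>0$.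
   Context: $\mathcal S^\downarrow$ is the set of nonincreasing sequences $s_1\ge s_2\ge\dots\ge 0$ with finitely many nonzero terms, identified with their nonzero entries (particles). For indices $i<j<k$ of nonzero entries, $\mathbf s^{i\oplus j\oplus k}$ is obtained by removing $s_i,s_j,s_k$, inserting $s_i+s_j+s_k$ and reranking decreasingly. The ternary coalescent is the continuous-time Markov jump process on $\mathcal S^\downarrow$ with jump rates $q(\mathbf s,\cdot)=\sum_{1\le i<j<k,\ s_k>0}(s_i+s_j+s_k+3)\delta_{\mathbf s^{i\oplus j\oplus k}}$. *)

theory Defs
  imports "HOL-Probability.Probability"
begin

text \<open>Finite configurations in S-down, identified with their nonzero entries (particles):
  nonincreasing lists of strictly positive reals.\<close>
definition Sdown_fin :: "real list set" where
  "Sdown_fin = {s. sorted_wrt (\<ge>) s \<and> (\<forall>x\<in>set s. x > 0)}"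

text \<open>Merging particles i,j,k (0-based indices) and reranking decreasingly.\<close>
definition merge3 :: "real list \<Rightarrow> nat \<Rightarrow> nat \<Rightarrow> nat \<Rightarrow> real list" where
  "merge3 s i j k =
     rev (sort ((s!i + s!j + s!k) # [s!m. m \<leftarrow> [0..<length s], m \<notin> {i, j, k}]))"

definition triples :: "real list \<Rightarrow> (nat \<times> nat \<times> nat) set" where
  "triples s = {(i, j, k). i < j \<and> j < k \<and> k < length s}"

definition trate :: "real list \<Rightarrow> nat \<times> nat \<times> nat \<Rightarrow> real" where
  "trate s t = (case t of (i, j, k) \<Rightarrow> s!i + s!j + s!k + 3)"

definition coal_rate :: "real list \<Rightarrow> real list \<Rightarrow> real" where
  "coal_rate s t = (\<Sum>x\<in>{x \<in> triples s. merge3 s (fst x) (fst (snd x)) (snd (snd x)) = t}. trate s x)"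

definition coal_total :: "real list \<Rightarrow> real" where
  "coal_total s = (\<Sum>x\<in>triples s. trate s x)"

definition jump_prob :: "real list \<Rightarrow> real list \<Rightarrow> real" where
  "jump_prob s t = coal_rate s t / coal_total s"

definition Exp_law :: "real \<Rightarrow> real measure" where
  "Exp_law c = density lborel (exponential_density c)"

definition hist :: "'w measure \<Rightarrow> (nat \<Rightarrow> 'w \<Rightarrow> real list) \<Rightarrow> nat \<Rightarrow> (nat \<Rightarrow> real list) \<Rightarrow> 'w set" where
  "hist P X l ss = {\<omega> \<in> space P. \<forall>k\<le>l. X k \<omega> = ss k}"

definition cond_prob :: "'w measure \<Rightarrow> 'w set \<Rightarrow> 'w set \<Rightarrow> real" where
  "cond_prob P A B = measure P (A \<inter> B) / measure P B"

text \<open>Jump-hold description of the ternary coalescent started from r with 2n+1 particles: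
  X' k is the state after the k-th coagulation (k \<le> n), H k (1 \<le> k \<le> n) is the k-th
  holding time T_k - T_(k-1).  The jump chain is Markov with kernel q(s,.)/q(s), and
  conditionally on the jump chain the holding times are independent exponentials with
  parameters q(X'_(k-1)).\<close>
definition ternary_coalescent_jump_hold ::
  "'w measure \<Rightarrow> real list \<Rightarrow> nat \<Rightarrow> (nat \<Rightarrow> 'w \<Rightarrow> real list) \<Rightarrow> (nat \<Rightarrow> 'w \<Rightarrow> real) \<Rightarrow> bool" where
  "ternary_coalescent_jump_hold P r n X H \<longleftrightarrow>
     prob_space P \<and>
     (\<forall>k. X k \<in> measurable P (count_space UNIV)) \<and>
     (\<forall>k. H k \<in> borel_measurable P) \<and>
     (\<forall>\<omega>\<in>space P. X 0 \<omega> = r) \<and>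
     (\<forall>l<n. \<forall>ss. measure P (hist P X (Suc l) ss)
                   = measure P (hist P X l ss) * jump_prob (ss l) (ss (Suc l))) \<and>
     (\<forall>ss B. (\<forall>k. B k \<in> sets borel) \<longrightarrow>
        measure P (hist P X n ss \<inter> {\<omega> \<in> space P. \<forall>k\<in>{1..n}. H k \<omega> \<in> B k})
          = measure P (hist P X n ss) * (\<Prod>k=1..n. measure (Exp_law (coal_total (ss (k - 1)))) (B k)))"

end

theory Submission
  imports Defs
begin


lemma pair_sum:
  fixes a :: "nat \<Rightarrow> real"
  shows "(\<Sum>(i,j)\<in>{(i,j). i<j \<and> j<m}. a i + a j) = (real m - 1) * (\<Sum>i<m. a i)"
proof (induction m)
  case 0
  then show ?case by simp
next
  case (Suc m)
  have e: "{(i,j). i<j \<and> j<Suc m} = {(i,j). i<j \<and> j<m} \<union> (\<lambda>i. (i,m)) ` {..<m}" by auto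
  have f: "finite {(i,j). i<j \<and> j<(m::nat)}"
    by (rule finite_subset[of _ "{..<m} \<times> {..<m}"]) auto
  have "(\<Sum>(i,j)\<in>{(i,j). i<j \<and> j<Suc m}. a i + a j)
     = (\<Sum>(i,j)\<in>{(i,j). i<j \<and> j<m}. a i + a j) + (\<Sum>(i,j)\<in>(\<lambda>i. (i,m)) ` {..<m}. a i + a j)"
    unfolding e by (rule sum.union_disjoint) (use f in auto)
  also have "(\<Sum>(i,j)\<in>(\<lambda>i. (i,m)) ` {..<m}. a i + a j) = (\<Sum>i<m. a i + a m)"
    by (subst sum.reindex) (auto simp: inj_on_def)
  finally show ?case using Suc by (simp add: sum.distrib algebra_simps)
qed

lemma triple_sum:
  fixes a :: "nat \<Rightarrow> real"
  shows "(\<Sum>(i,j,k)\<in>{(i,j,k). i<j \<and> j<k \<and> k<m}. a i + a j + a k) = (real m - 1)*(real m - 2)/2 * (\<Sum>i<m. a i)"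
proof (induction m)
  case 0
  then show ?case by simp
next
  case (Suc m)
  have e: "{(i,j,k). i<j \<and> j<k \<and> k<Suc m} = {(i,j,k). i<j \<and> j<k \<and> k<m} \<union> (\<lambda>(i,j). (i,j,m)) ` {(i,j). i<j \<and> j<m}"
    by (auto simp: image_iff)
  have f: "finite {(i,j,k). i<j \<and> j<k \<and> k<(m::nat)}"
    by (rule finite_subset[of _ "{..<m} \<times> {..<m} \<times> {..<m}"]) auto
  have f2: "finite {(i,j). i<j \<and> j<(m::nat)}"
    by (rule finite_subset[of _ "{..<m} \<times> {..<m}"]) auto
  have "(\<Sum>(i,j,k)\<in>{(i,j,k). i<j \<and> j<k \<and> k<Suc m}. a i + a j + a k)
     = (\<Sum>(i,j,k)\<in>{(i,j,k). i<j \<and> j<k \<and> k<m}. a i + a j + a k) + (\<Sum>(i,j,k)\<in>(\<lambda>(i,j). (i,j,m)) ` {(i,j). i<j \<and> j<m}. a i + a j + a k)"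
    unfolding e by (rule sum.union_disjoint) (use f f2 in auto)
  also have "(\<Sum>(i,j,k)\<in>(\<lambda>(i,j). (i,j,m)) ` {(i,j). i<j \<and> j<m}. a i + a j + a k) = (\<Sum>(i,j)\<in>{(i,j). i<j \<and> j<m}. (a i + a j) + a m)"
    by (subst sum.reindex) (auto simp: inj_on_def intro!: sum.cong)
  also have "\<dots> = (real m - 1) * (\<Sum>i<m. a i) + real (card {(i,j). i<j \<and> j<m}) * a m"
    by (subst pair_sum[symmetric]) (simp add: sum.distrib split_def)
  also have "real (card {(i,j). i<j \<and> j<m}) = (real m - 1) * real m / 2"
  proof -
    have "real (card {(i,j). i<j \<and> j<m}) = (\<Sum>(i,j)\<in>{(i,j). i<j \<and> j<m}. (1/2::real) + 1/2)" by simp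
    also have "\<dots> = (real m - 1) * real m / 2" by (subst pair_sum) simp
    finally show ?thesis .
  qed
  finally show ?case using Suc by (simp add: algebra_simps add_divide_distrib diff_divide_distrib)
qed


lemma coal_total_eq:
  "coal_total s = (real (length s) - 1) * (real (length s) - 2) / 2 * (sum_list s + real (length s))"
proof -
  have "coal_total s = (\<Sum>(i,j,k)\<in>{(i,j,k). i<j \<and> j<k \<and> k<length s}. (s!i+1) + (s!j+1) + (s!k+1))"
    unfolding coal_total_def triples_def trate_def by (intro sum.cong) auto
  also have "\<dots> = (real (length s) - 1) * (real (length s) - 2) / 2 * (\<Sum>i<length s. s!i + 1)"
    by (rule triple_sum)
  also have "(\<Sum>i<length s. s!i + 1) = sum_list s + real (length s)"
    by (simp add: sum.distrib sum_list_sum_nth atLeast0LessThan)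
  finally show ?thesis .
qed

lemma sum_list_sort_real: "sum_list (sort xs) = sum_list (xs::real list)"
  by (metis mset_sort sum_mset_sum_list)

lemma concat_map_if: "concat (map (\<lambda>m. if P m then [f m] else []) xs) = map f (filter P xs)"
  by (induction xs) auto

lemma merge3_props:
  assumes "i < j" "j < k" "k < length s"
  shows "length (merge3 s i j k) = length s - 2"
    and "sum_list (merge3 s i j k) = sum_list s"
    and "(\<forall>x\<in>set s. x > 0) \<Longrightarrow> (\<forall>x\<in>set (merge3 s i j k). x > 0)"
proof -
  let ?L = "filter (\<lambda>m. m \<notin> {i,j,k}) [0..<length s]"
  have l: "[s!m. m \<leftarrow> [0..<length s], m \<notin> {i, j, k}] = map ((!) s) ?L"
    using concat_map_if[of "\<lambda>m. m \<notin> {i, j, k}" "(!) s"] by simp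
  have m: "merge3 s i j k = rev (sort ((s!i + s!j + s!k) # map ((!) s) ?L))"
    unfolding merge3_def l ..
  have setL: "set ?L = {0..<length s} - {i,j,k}" by auto
  have dL: "distinct ?L" by simp
  have cardL: "length ?L = length s - 3"
  proof -
    have "length ?L = card (set ?L)" using distinct_card[OF dL] by simp
    also have "\<dots> = card {0..<length s} - card {i,j,k}" unfolding setL
      by (rule card_Diff_subset) (use assms in auto)
    finally show ?thesis using assms by simp
  qed
  show "length (merge3 s i j k) = length s - 2" unfolding m using cardL assms by simp
  have "sum_list (merge3 s i j k) = (s!i + s!j + s!k) + sum_list (map ((!) s) ?L)"
    unfolding m sum_list_rev sum_list_sort_real by simp
  also have "sum_list (map ((!) s) ?L) = sum ((!) s) ({0..<length s} - {i,j,k})"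
    using sum_list_distinct_conv_sum_set[OF dL, of "(!) s"] setL by simp
  also have "\<dots> = sum ((!) s) {0..<length s} - sum ((!) s) {i,j,k}"
    by (rule sum_diff) (use assms in auto)
  also have "sum ((!) s) {i,j,k} = s!i + s!j + s!k" using assms by simp
  finally show "sum_list (merge3 s i j k) = sum_list s" by (simp add: sum_list_sum_nth)
  show "(\<forall>x\<in>set s. x > 0) \<Longrightarrow> (\<forall>x\<in>set (merge3 s i j k). x > 0)"
  proof
    fix x assume p: "\<forall>x\<in>set s. x > 0" and x: "x \<in> set (merge3 s i j k)"
    have "\<forall>m<length s. s!m > 0" using p by auto
    moreover have "x = s!i+s!j+s!k \<or> (\<exists>m\<in>set ?L. x = s!m)" using x unfolding m by (auto simp del: sort_key_simps simp add: set_sort)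
    ultimately show "x > 0" using assms by (auto intro!: add_pos_pos)
  qed
qed


primrec reach :: "real list \<Rightarrow> nat \<Rightarrow> real list set" where
  "reach r 0 = {r}"
| "reach r (Suc l) = (\<Union>s\<in>reach r l. (\<lambda>(a,b,c). merge3 s a b c) ` triples s)"

lemma finite_triples: "finite (triples s)"
  unfolding triples_def
  by (rule finite_subset[of _ "{..<length s} \<times> {..<length s} \<times> {..<length s}"]) auto

lemma finite_reach: "finite (reach r l)"
  by (induction l) (auto simp: finite_triples)

lemma reach_inv:
  assumes "\<forall>x\<in>set r. x > 0" "s \<in> reach r l" "2 * l < length r"
  shows "(\<forall>x\<in>set s. x > 0) \<and> length s = length r - 2 * l \<and> sum_list s = sum_list r"
  using assms(2,3)
proof (induction l arbitrary: s)
  case 0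
  then show ?case using assms(1) by simp
next
  case (Suc l)
  then obtain s' a b c where s': "s' \<in> reach r l" "(a,b,c) \<in> triples s'" "s = merge3 s' a b c"
    by auto
  have IH: "(\<forall>x\<in>set s'. x > 0) \<and> length s' = length r - 2 * l \<and> sum_list s' = sum_list r"
    using Suc.IH[OF s'(1)] Suc.prems by simp
  have abc: "a < b" "b < c" "c < length s'" using s'(2) by (auto simp: triples_def)
  show ?case using merge3_props[OF abc] IH s'(3) by simp
qed

lemma sum_jump:
  assumes fin: "finite R" and sub: "(\<lambda>(a,b,c). merge3 s a b c) ` triples s \<subseteq> R"
    and pos: "coal_total s \<noteq> 0"
  shows "(\<Sum>t\<in>R. jump_prob s t) = 1"
proof -
  have "(\<Sum>t\<in>R. coal_rate s t) = coal_total s"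
    unfolding coal_rate_def coal_total_def
    by (rule sum.group[OF finite_triples fin]) (use sub in \<open>auto simp: split_def\<close>)
  then show ?thesis unfolding jump_prob_def using pos by (simp add: sum_divide_distrib[symmetric])
qed

locale tcj = prob_space P for P :: "'w measure" +
  fixes r :: "real list" and n :: nat and X :: "nat \<Rightarrow> 'w \<Rightarrow> real list" and H :: "nat \<Rightarrow> 'w \<Rightarrow> real"
  assumes r_pos: "\<forall>x\<in>set r. x > 0" and r_len: "length r = 2*n+1"
   and Xm: "\<And>k. X k \<in> measurable P (count_space UNIV)"
   and Hm: "\<And>k. H k \<in> borel_measurable P"
   and X0: "\<And>\<omega>. \<omega>\<in>space P \<Longrightarrow> X 0 \<omega> = r"
   and step: "\<And>l ss. l<n \<Longrightarrow> measure P (hist P X (Suc l) ss) = measure P (hist P X l ss) * jump_prob (ss l) (ss (Suc l))"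
   and hold: "\<And>ss B. (\<And>k. B k \<in> sets borel) \<Longrightarrow> measure P (hist P X n ss \<inter> {\<omega> \<in> space P. \<forall>k\<in>{1..n}. H k \<omega> \<in> B k}) = measure P (hist P X n ss) * (\<Prod>k=1..n. measure (Exp_law (coal_total (ss (k - 1)))) (B k))"
begin

definition "paths l = Pi\<^sub>E {..l} (reach r)"

definition "alpha k = (sum_list r + real (2*n+1) + 2 - 2 * real k) * (real (2*n+1) + 1 - 2 * real k)
                          * (real (2*n+1) - 2 * real k) / 2"

lemma Xev: "{\<omega>\<in>space P. X k \<omega> = s} \<in> events"
  using Xm[of k] by (simp add: measurable_count_space_eq2 vimage_def Int_def conj_commute)

lemma hist_ev: "hist P X l p \<in> events"
proof -
  have "hist P X l p = space P \<inter> (\<Inter>k\<in>{..l}. {\<omega>\<in>space P. X k \<omega> = p k})"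
    unfolding hist_def by auto
  then show ?thesis using Xev by auto
qed

lemma hist_cong: "(\<And>k. k \<le> l \<Longrightarrow> p k = q k) \<Longrightarrow> hist P X l p = hist P X l q"
  unfolding hist_def by auto

lemma hist_Suc: "hist P X l p \<inter> {\<omega>\<in>space P. X (Suc l) \<omega> = t} = hist P X (Suc l) (p(Suc l := t))"
  unfolding hist_def by (auto simp: le_Suc_eq)

lemma finite_paths: "finite (paths l)"
  unfolding paths_def by (auto intro!: finite_PiE finite_reach)

lemma hist_disj: "disjoint_family_on (hist P X l) (paths l)"
unfolding disjoint_family_on_def
proof (intro ballI impI)
  fix p q assume p: "p \<in> paths l" and q: "q \<in> paths l" and ne: "p \<noteq> q"
  have "\<exists>k\<le>l. p k \<noteq> q k"
  proof (rule ccontr)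
    assume "\<not> ?thesis"
    then have "p = q" using p q unfolding paths_def by (intro PiE_ext[of p "{..l}" "reach r" q]) auto
    then show False using ne by simp
  qed
  then show "hist P X l p \<inter> hist P X l q = {}" unfolding hist_def by auto
qed

lemma reach_inv': "s \<in> reach r l \<Longrightarrow> l \<le> n \<Longrightarrow> (\<forall>x\<in>set s. x > 0) \<and> length s = 2*(n-l)+1 \<and> sum_list s = sum_list r"
  using reach_inv[OF r_pos, of s l] r_len by auto

lemma coal_total_reach: 
  assumes "s \<in> reach r l" "l < n"
  shows "coal_total s = alpha (Suc l)" "alpha (Suc l) > 0"
proof -
  have i: "(\<forall>x\<in>set s. x > 0) \<and> length s = 2*(n-l)+1 \<and> sum_list s = sum_list r" using reach_inv'[OF assms(1)] assms(2) by simp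
  have rl: "real (length s) = real (2*n+1) + 2 - 2 * real (Suc l)" using i assms(2) by (simp add: of_nat_diff)
  have sl: "sum_list s = sum_list r" using i by simp
  show "coal_total s = alpha (Suc l)" unfolding coal_total_eq alpha_def rl sl by (simp add: algebra_simps)
  have "sum_list r \<ge> 0" using r_pos by (intro sum_list_nonneg) (auto intro: less_imp_le)
  moreover have "real (2*n+1) + 1 - 2 * real (Suc l) > 0" "real (2*n+1) - 2 * real (Suc l) > 0" using assms(2) by auto
  ultimately show "alpha (Suc l) > 0" unfolding alpha_def
    by (intro divide_pos_pos mult_pos_pos) auto
qed

lemma paths_sum: "l \<le> n \<Longrightarrow> (\<Sum>p\<in>paths l. prob (hist P X l p)) = 1"
proof (induction l)
  case 0
  have "\<And>p. p \<in> paths 0 \<Longrightarrow> prob (hist P X 0 p) = 1"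
  proof -
    fix p assume "p \<in> paths 0"
    then have "p 0 \<in> reach r 0" unfolding paths_def by (rule PiE_mem) simp
    then have "p 0 = r" by simp
    then have "hist P X 0 p = space P" unfolding hist_def using X0 by auto
    then show "prob (hist P X 0 p) = 1" by (simp add: prob_space)
  qed
  then have "(\<Sum>p\<in>paths 0. prob (hist P X 0 p)) = (\<Sum>p\<in>paths 0. 1)" by (intro sum.cong) auto
  also have "\<dots> = real (card (paths 0))" by simp
  also have "card (paths 0) = 1" unfolding paths_def by (simp add: card_PiE)
  finally show ?case by simp
next
  case (Suc l)
  have e: "paths (Suc l) = (\<lambda>(y, g). g(Suc l := y)) ` (reach r (Suc l) \<times> paths l)"
    unfolding paths_def atMost_Suc by (rule PiE_insert_eq)
  have inj: "inj_on (\<lambda>(y, g). g(Suc l := y)) (reach r (Suc l) \<times> paths l)"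
    unfolding paths_def by (rule inj_combinator) simp
  have "(\<Sum>p\<in>paths (Suc l). prob (hist P X (Suc l) p))
     = (\<Sum>(t,p)\<in>reach r (Suc l) \<times> paths l. prob (hist P X (Suc l) (p(Suc l := t))))"
    unfolding e by (subst sum.reindex[OF inj]) (simp add: split_def)
  also have "\<dots> = (\<Sum>(t,p)\<in>reach r (Suc l) \<times> paths l. prob (hist P X l p) * jump_prob (p l) t)"
  proof (intro sum.cong refl, clarify)
    fix t p
    have "prob (hist P X (Suc l) (p(Suc l := t))) = prob (hist P X l (p(Suc l := t))) * jump_prob ((p(Suc l := t)) l) ((p(Suc l := t)) (Suc l))"
      using step[of l "p(Suc l := t)"] Suc.prems by simp
    also have "hist P X l (p(Suc l := t)) = hist P X l p" by (rule hist_cong) simp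
    also have "(p(Suc l := t)) l = p l" by simp
    also have "(p(Suc l := t)) (Suc l) = t" by simp
    finally show "prob (hist P X (Suc l) (p(Suc l := t))) = prob (hist P X l p) * jump_prob (p l) t" .
  qed
  also have "\<dots> = (\<Sum>p\<in>paths l. prob (hist P X l p) * (\<Sum>t\<in>reach r (Suc l). jump_prob (p l) t))"
    unfolding sum.cartesian_product[symmetric] by (subst sum.swap) (simp add: sum_distrib_left del: reach.simps)
  also have "\<dots> = (\<Sum>p\<in>paths l. prob (hist P X l p))"
  proof (intro sum.cong refl)
    fix p assume p: "p \<in> paths l"
    then have pl: "p l \<in> reach r l" unfolding paths_def by auto
    have "(\<Sum>t\<in>reach r (Suc l). jump_prob (p l) t) = 1"
    proof (rule sum_jump[OF finite_reach])
      show "(\<lambda>(a, b, c). merge3 (p l) a b c) ` triples (p l) \<subseteq> reach r (Suc l)"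
      proof clarify
        fix a b c assume abc: "(a,b,c) \<in> triples (p l)"
        show "merge3 (p l) a b c \<in> reach r (Suc l)" unfolding reach.simps
          by (rule UN_I[OF pl], rule image_eqI[where x="(a,b,c)"]) (use abc in auto)
      qed
      show "coal_total (p l) \<noteq> 0" using coal_total_reach[OF pl] Suc.prems by simp
    qed
    then show "prob (hist P X l p) * (\<Sum>t\<in>reach r (Suc l). jump_prob (p l) t) = prob (hist P X l p)" by simp
  qed
  finally show ?case using Suc by simp
qed

lemma tot:
  assumes "l \<le> n" "E \<in> events"
  shows "prob E = (\<Sum>p\<in>paths l. prob (E \<inter> hist P X l p))"
proof -
  let ?U = "\<Union>p\<in>paths l. hist P X l p"
  have Uev: "?U \<in> events" using hist_ev finite_paths by auto
  have "prob ?U = (\<Sum>p\<in>paths l. prob (hist P X l p))"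
    by (rule measure_finite_Union[OF finite_paths]) (use hist_ev hist_disj in auto)
  then have pU: "prob ?U = 1" using paths_sum[OF assms(1)] by simp
  have "prob (E - ?U) \<le> prob (space P - ?U)" by (rule finite_measure_mono) (use assms Uev sets.sets_into_space in auto)
  also have "\<dots> = 0" using prob_compl[OF Uev] pU by simp
  finally have z: "prob (E - ?U) = 0" using measure_nonneg[of P "E - ?U"] by linarith
  have eE: "E = (E \<inter> ?U) \<union> (E - ?U)" by blast
  have "prob E = prob ((E \<inter> ?U) \<union> (E - ?U))" by (rule arg_cong[where f=prob, OF eE])
  also have "\<dots> = prob (E \<inter> ?U) + prob (E - ?U)"
    by (rule finite_measure_Union[OF sets.Int[OF assms(2) Uev] sets.Diff[OF assms(2) Uev]]) blast
  also have "prob (E \<inter> ?U) = prob (\<Union>p\<in>paths l. E \<inter> hist P X l p)"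
    by (rule arg_cong[where f=prob]) blast
  also have "\<dots> = (\<Sum>p\<in>paths l. prob (E \<inter> hist P X l p))"
  proof (rule measure_finite_Union[OF finite_paths])
    show "(\<lambda>p. E \<inter> hist P X l p) ` paths l \<subseteq> events" using hist_ev assms by auto
    show "disjoint_family_on (\<lambda>p. E \<inter> hist P X l p) (paths l)"
      using hist_disj unfolding disjoint_family_on_def by blast
  qed (simp add: emeasure_eq_measure)
  finally show ?thesis using z by simp
qed

end


context tcj begin

lemma markov_step:
  assumes "l < n"
  shows "prob ({\<omega>\<in>space P. X (Suc l) \<omega> = t} \<inter> hist P X l ss) = prob (hist P X l ss) * jump_prob (ss l) t"
proof -
  have "{\<omega>\<in>space P. X (Suc l) \<omega> = t} \<inter> hist P X l ss = hist P X (Suc l) (ss(Suc l := t))"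
    using hist_Suc[of l ss t] by blast
  also have "prob \<dots> = prob (hist P X l (ss(Suc l := t))) * jump_prob ((ss(Suc l := t)) l) ((ss(Suc l := t)) (Suc l))"
    using step[OF assms] .
  also have "hist P X l (ss(Suc l := t)) = hist P X l ss" by (rule hist_cong) simp
  also have "(ss(Suc l := t)) l = ss l" by simp
  also have "(ss(Suc l := t)) (Suc l) = t" by simp
  finally show ?thesis .
qed

lemma marg_step:
  assumes "l < n"
  shows "prob ({\<omega>\<in>space P. X (Suc l) \<omega> = t} \<inter> {\<omega>\<in>space P. X l \<omega> = s}) = prob {\<omega>\<in>space P. X l \<omega> = s} * jump_prob s t"
proof -
  let ?E = "{\<omega>\<in>space P. X (Suc l) \<omega> = t} \<inter> {\<omega>\<in>space P. X l \<omega> = s}"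
  have "prob ?E = (\<Sum>p\<in>paths l. prob (?E \<inter> hist P X l p))"
    by (rule tot[OF less_imp_le[OF assms] sets.Int[OF Xev Xev]])
  also have "\<dots> = (\<Sum>p\<in>paths l. prob ({\<omega>\<in>space P. X l \<omega> = s} \<inter> hist P X l p) * jump_prob s t)"
  proof (intro sum.cong refl)
    fix p
    show "prob (?E \<inter> hist P X l p) = prob ({\<omega>\<in>space P. X l \<omega> = s} \<inter> hist P X l p) * jump_prob s t"
    proof (cases "p l = s")
      case True
      have "?E \<inter> hist P X l p = {\<omega>\<in>space P. X (Suc l) \<omega> = t} \<inter> hist P X l p"
        using True unfolding hist_def by auto
      moreover have "{\<omega>\<in>space P. X l \<omega> = s} \<inter> hist P X l p = hist P X l p"
        using True unfolding hist_def by auto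
      ultimately show ?thesis using markov_step[OF assms, of t p] True by simp
    next
      case False
      then have "?E \<inter> hist P X l p = {}" "{\<omega>\<in>space P. X l \<omega> = s} \<inter> hist P X l p = {}"
        unfolding hist_def by auto
      then show ?thesis by simp
    qed
  qed
  also have "\<dots> = prob {\<omega>\<in>space P. X l \<omega> = s} * jump_prob s t"
    using tot[OF less_imp_le[OF assms] Xev, of l s] by (simp add: sum_distrib_right)
  finally show ?thesis .
qed

lemma Hrect_ev: "(\<And>k. B k \<in> sets borel) \<Longrightarrow> {\<omega>\<in>space P. \<forall>k\<in>K. H k \<omega> \<in> B k} \<in> events" if "finite K"
proof -
  assume B: "\<And>k. B k \<in> sets borel"
  have "{\<omega>\<in>space P. \<forall>k\<in>K. H k \<omega> \<in> B k} = space P \<inter> (\<Inter>k\<in>K. H k -` B k \<inter> space P)" by auto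
  show ?thesis
  proof (cases "K = {}")
    case True then show ?thesis by simp
  next
    case False
    have "(\<Inter>k\<in>K. H k -` B k \<inter> space P) \<in> events"
      using False that by (intro sets.finite_INT) (auto intro: measurable_sets[OF Hm] B)
    then show ?thesis unfolding \<open>{\<omega>\<in>space P. \<forall>k\<in>K. H k \<omega> \<in> B k} = _\<close> by auto
  qed
qed

lemma coal_total_path:
  assumes "p \<in> paths n" "k \<in> {1..n}"
  shows "coal_total (p (k - 1)) = alpha k" "alpha k > 0"
proof -
  have "p (k - 1) \<in> reach r (k - 1)" by (rule PiE_mem[OF assms(1)[unfolded paths_def]]) (use assms(2) in auto)
  moreover have k: "Suc (k-1) = k" "k - 1 < n" using assms(2) by auto
  ultimately show "coal_total (p (k - 1)) = alpha k" "alpha k > 0"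
    using coal_total_reach[of "p (k - 1)" "k - 1"] by simp_all
qed

end


lemma prob_space_Exp_law: "c > 0 \<Longrightarrow> prob_space (Exp_law c)"
  unfolding Exp_law_def by (rule prob_space_exponential_density)

lemma sets_Exp_law[simp]: "sets (Exp_law c) = sets borel"
  unfolding Exp_law_def by simp

lemma space_Exp_law[simp]: "space (Exp_law c) = UNIV"
  unfolding Exp_law_def by simp

context tcj begin

definition "ExL k = (if k \<in> {1..n} then Exp_law (alpha k) else Exp_law 1)"
definition "Hvec \<omega> = (\<lambda>k\<in>{1..n}. H k \<omega>)"
definition "Qm = PiM {1..n} ExL"

lemma alpha_pos: "k \<in> {1..n} \<Longrightarrow> alpha k > 0"
proof -
  assume k: "k \<in> {1..n}"
  have "sum_list r \<ge> 0" using r_pos by (intro sum_list_nonneg) (auto intro: less_imp_le)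
  moreover have "real (2*n+1) + 1 - 2 * real k > 0" "real (2*n+1) - 2 * real k > 0" using k by auto
  ultimately show "alpha k > 0" unfolding alpha_def
    by (intro divide_pos_pos mult_pos_pos) auto
qed

lemma ExL_prob: "prob_space (ExL k)"
  unfolding ExL_def using alpha_pos by (auto intro!: prob_space_Exp_law)

lemma sets_ExL[simp]: "sets (ExL k) = sets borel" unfolding ExL_def by simp
lemma space_ExL[simp]: "space (ExL k) = UNIV" unfolding ExL_def by simp

lemma pps: "product_prob_space ExL"
  unfolding product_prob_space_def product_prob_space_axioms_def product_sigma_finite_def
  using ExL_prob by (simp add: prob_space_imp_sigma_finite)

lemma sets_Qm: "sets Qm = sets (PiM {1..n} (\<lambda>_. borel))"
  unfolding Qm_def by (rule sets_PiM_cong) auto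

lemma Qm_prob: "prob_space Qm"
  unfolding Qm_def by (rule prob_space_PiM) (rule ExL_prob)

lemma Hvec_meas: "Hvec \<in> measurable P (PiM {1..n} (\<lambda>_. borel))"
  unfolding Hvec_def by (rule measurable_restrict) (rule Hm)

lemma emeasure_Qm_rect: "(\<And>k. k \<in> {1..n} \<Longrightarrow> A k \<in> sets borel) \<Longrightarrow>
   emeasure Qm (Pi\<^sub>E {1..n} A) = (\<Prod>k=1..n. emeasure (Exp_law (alpha k)) (A k))"
  unfolding Qm_def
  by (subst product_sigma_finite.emeasure_PiM[OF product_prob_space.axioms(1)[OF pps]]) (auto simp: ExL_def)


lemma rect:
  assumes B: "\<And>k. B k \<in> sets borel"
  shows "prob {\<omega>\<in>space P. \<forall>k\<in>{1..n}. H k \<omega> \<in> B k} = (\<Prod>k=1..n. measure (Exp_law (alpha k)) (B k))"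
proof -
  let ?E = "{\<omega>\<in>space P. \<forall>k\<in>{1..n}. H k \<omega> \<in> B k}"
  have "prob ?E = (\<Sum>p\<in>paths n. prob (?E \<inter> hist P X n p))"
    by (rule tot[OF order_refl Hrect_ev[OF _ B]]) simp
  also have "\<dots> = (\<Sum>p\<in>paths n. prob (hist P X n p) * (\<Prod>k=1..n. measure (Exp_law (alpha k)) (B k)))"
  proof (intro sum.cong refl)
    fix p assume p: "p \<in> paths n"
    have "prob (?E \<inter> hist P X n p) = prob (hist P X n p \<inter> ?E)" by (simp add: Int_commute)
    also have "\<dots> = prob (hist P X n p) * (\<Prod>k=1..n. measure (Exp_law (coal_total (p (k - 1)))) (B k))"
      by (rule hold[OF B])
    also have "(\<Prod>k=1..n. measure (Exp_law (coal_total (p (k - 1)))) (B k)) = (\<Prod>k=1..n. measure (Exp_law (alpha k)) (B k))"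
    proof (intro prod.cong refl)
      fix k assume k: "k \<in> {1..n}"
      show "measure (Exp_law (coal_total (p (k - 1)))) (B k) = measure (Exp_law (alpha k)) (B k)"
        using coal_total_path(1)[OF p k] by simp
    qed
    finally show "prob (?E \<inter> hist P X n p) = prob (hist P X n p) * (\<Prod>k=1..n. measure (Exp_law (alpha k)) (B k))" .
  qed
  also have "\<dots> = (\<Prod>k=1..n. measure (Exp_law (alpha k)) (B k))"
    by (simp add: sum_distrib_right[symmetric] paths_sum)
  finally show ?thesis .
qed

lemma Hvec_pre: "\<omega> \<in> space P \<Longrightarrow> Hvec \<omega> \<in> Pi\<^sub>E {1..n} A \<longleftrightarrow> (\<forall>k\<in>{1..n}. H k \<omega> \<in> A k)"
  unfolding Hvec_def by auto

lemma hvec_cond: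
  assumes p: "p \<in> paths n" and Bs: "Bs \<in> sets (PiM {1..n} (\<lambda>_. borel))"
  shows "prob (hist P X n p \<inter> (Hvec -` Bs \<inter> space P)) = prob (hist P X n p) * measure Qm Bs"
proof (cases "prob (hist P X n p) = 0")
  case True
  have "prob (hist P X n p \<inter> (Hvec -` Bs \<inter> space P)) \<le> prob (hist P X n p)"
    by (rule finite_measure_mono) (auto intro: hist_ev)
  then show ?thesis using True measure_nonneg[of P "hist P X n p \<inter> (Hvec -` Bs \<inter> space P)"] by simp
next
  case False
  let ?h = "hist P X n p"
  let ?c = "prob ?h"
  have hs: "?h \<subseteq> space P" unfolding hist_def by auto
  have hev: "?h \<in> events" by (rule hist_ev)
  define \<nu> where "\<nu> = distr (restrict_space P ?h) (PiM {1..n} (\<lambda>_. borel)) Hvec"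
  have Hr: "Hvec \<in> measurable (restrict_space P ?h) (PiM {1..n} (\<lambda>_. borel))"
    by (rule measurable_restrict_space1[OF Hvec_meas])
  have spr: "space (restrict_space P ?h) = ?h" using hs by (auto simp: space_restrict_space)
  have nu_eq: "emeasure \<nu> S = emeasure P (?h \<inter> (Hvec -` S \<inter> space P))" if S: "S \<in> sets (PiM {1..n} (\<lambda>_. borel))" for S
  proof -
    have "emeasure \<nu> S = emeasure (restrict_space P ?h) (Hvec -` S \<inter> ?h)"
      unfolding \<nu>_def by (subst emeasure_distr[OF Hr S]) (simp add: spr)
    also have "\<dots> = emeasure P (Hvec -` S \<inter> ?h)"
      by (rule emeasure_restrict_space) (use hev hs in \<open>auto simp: Int_absorb2\<close>)
    also have "Hvec -` S \<inter> ?h = ?h \<inter> (Hvec -` S \<inter> space P)" using hs by auto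
    finally show ?thesis .
  qed
  have rec: "emeasure \<nu> (Pi\<^sub>E {1..n} A) = emeasure (scale_measure (ennreal ?c) Qm) (Pi\<^sub>E {1..n} A)"
    if A: "\<And>k. k \<in> {1..n} \<Longrightarrow> A k \<in> sets borel" for A
  proof -
    define A' where "A' k = (if k \<in> {1..n} then A k else UNIV)" for k
    have A': "\<And>k. A' k \<in> sets borel" using A unfolding A'_def by auto
    have PS: "Pi\<^sub>E {1..n} A \<in> sets (PiM {1..n} (\<lambda>_. borel))"
      using A by (intro sets_PiM_I_finite) auto
    have "emeasure \<nu> (Pi\<^sub>E {1..n} A) = emeasure P (?h \<inter> (Hvec -` Pi\<^sub>E {1..n} A \<inter> space P))"
      by (rule nu_eq[OF PS])
    also have "?h \<inter> (Hvec -` Pi\<^sub>E {1..n} A \<inter> space P) = ?h \<inter> {\<omega>\<in>space P. \<forall>k\<in>{1..n}. H k \<omega> \<in> A' k}"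
      using Hvec_pre[of _ A] unfolding A'_def by auto
    also have "emeasure P \<dots> = ennreal (prob (?h \<inter> {\<omega>\<in>space P. \<forall>k\<in>{1..n}. H k \<omega> \<in> A' k}))"
      by (rule emeasure_eq_measure)
    also have "prob (?h \<inter> {\<omega>\<in>space P. \<forall>k\<in>{1..n}. H k \<omega> \<in> A' k}) = ?c * (\<Prod>k=1..n. measure (Exp_law (coal_total (p (k - 1)))) (A' k))"
      by (rule hold[OF A'])
    also have "(\<Prod>k=1..n. measure (Exp_law (coal_total (p (k - 1)))) (A' k)) = (\<Prod>k=1..n. measure (Exp_law (alpha k)) (A k))"
    proof (intro prod.cong refl)
      fix k assume k: "k \<in> {1..n}"
      show "measure (Exp_law (coal_total (p (k - 1)))) (A' k) = measure (Exp_law (alpha k)) (A k)"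
        using coal_total_path(1)[OF p k] k by (simp add: A'_def)
    qed
    also have "ennreal (?c * (\<Prod>k=1..n. measure (Exp_law (alpha k)) (A k))) = ennreal ?c * (\<Prod>k=1..n. emeasure (Exp_law (alpha k)) (A k))"
    proof -
      have "(\<Prod>k=1..n. emeasure (Exp_law (alpha k)) (A k)) = (\<Prod>k=1..n. ennreal (measure (Exp_law (alpha k)) (A k)))"
        by (intro prod.cong refl) (simp add: finite_measure.emeasure_eq_measure[OF prob_space.axioms(1)[OF prob_space_Exp_law[OF alpha_pos]]])
      also have "\<dots> = ennreal (\<Prod>k=1..n. measure (Exp_law (alpha k)) (A k))"
        by (rule prod_ennreal) simp
      finally show ?thesis by (simp add: ennreal_mult prod_nonneg measure_nonneg)
    qed
    also have "\<dots> = emeasure (scale_measure (ennreal ?c) Qm) (Pi\<^sub>E {1..n} A)"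
      using emeasure_Qm_rect[of A] A by simp
    finally show ?thesis .
  qed
  have nuQ: "\<nu> = scale_measure (ennreal ?c) Qm"
  proof (rule measure_eqI_PiM_finite[where I="{1..n}" and M="\<lambda>_. borel"])
    show "sets \<nu> = sets (PiM {1..n} (\<lambda>_. borel))" unfolding \<nu>_def by simp
    show "sets (scale_measure (ennreal ?c) Qm) = sets (PiM {1..n} (\<lambda>_. borel))" by (simp add: sets_Qm)
    show "range (\<lambda>_::nat. space (PiM {1..n} (\<lambda>_. borel))) \<subseteq> prod_algebra {1..n} (\<lambda>_. borel)"
      using space_in_prod_algebra[of "{1..n}" "\<lambda>_. borel"] by (auto simp: space_PiM)
    have "emeasure \<nu> (Pi\<^sub>E {1..n} (\<lambda>_. UNIV)) = emeasure (scale_measure (ennreal ?c) Qm) (Pi\<^sub>E {1..n} (\<lambda>_. UNIV))"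
      by (rule rec) simp
    also have "\<dots> \<noteq> \<infinity>" using prob_space.emeasure_le_1[OF Qm_prob]
      by (simp add: ennreal_mult_eq_top_iff) (metis ennreal_one_neq_top top.extremum_unique)
    finally show "\<And>i::nat. emeasure \<nu> (space (PiM {1..n} (\<lambda>_. borel))) \<noteq> \<infinity>" by (simp add: space_PiM)
  next
    fix A :: "nat \<Rightarrow> real set" assume "\<And>i. i \<in> {1..n} \<Longrightarrow> A i \<in> sets ((\<lambda>_. borel) i)"
    then show "emeasure \<nu> (Pi\<^sub>E {1..n} A) = emeasure (scale_measure (ennreal ?c) Qm) (Pi\<^sub>E {1..n} A)"
      by (intro rec) simp
  qed simp_all
  have "ennreal (prob (?h \<inter> (Hvec -` Bs \<inter> space P))) = emeasure \<nu> Bs"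
    using nu_eq[OF Bs] by (simp add: emeasure_eq_measure)
  also have "\<dots> = ennreal ?c * emeasure Qm Bs" by (simp add: nuQ)
  also have "\<dots> = ennreal (?c * measure Qm Bs)"
    by (simp add: finite_measure.emeasure_eq_measure[OF prob_space.axioms(1)[OF Qm_prob]] ennreal_mult measure_nonneg)
  finally show ?thesis by (simp add: ennreal_inj)
qed

end


context tcj begin

lemma Hprob:
  assumes Bs: "Bs \<in> sets (PiM {1..n} (\<lambda>_. borel))"
  shows "prob (Hvec -` Bs \<inter> space P) = measure Qm Bs"
proof -
  have ev: "Hvec -` Bs \<inter> space P \<in> events" by (rule measurable_sets[OF Hvec_meas Bs])
  have "prob (Hvec -` Bs \<inter> space P) = (\<Sum>p\<in>paths n. prob ((Hvec -` Bs \<inter> space P) \<inter> hist P X n p))"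
    by (rule tot[OF order_refl ev])
  also have "\<dots> = (\<Sum>p\<in>paths n. prob (hist P X n p) * measure Qm Bs)"
  proof (intro sum.cong refl)
    fix p assume p: "p \<in> paths n"
    have "(Hvec -` Bs \<inter> space P) \<inter> hist P X n p = hist P X n p \<inter> (Hvec -` Bs \<inter> space P)" by blast
    then show "prob ((Hvec -` Bs \<inter> space P) \<inter> hist P X n p) = prob (hist P X n p) * measure Qm Bs"
      using hvec_cond[OF p Bs] by simp
  qed
  also have "\<dots> = measure Qm Bs" by (simp add: sum_distrib_right[symmetric] paths_sum)
  finally show ?thesis .
qed

lemma distr_Hvec: "distr P (PiM {1..n} (\<lambda>_. borel)) Hvec = Qm"
proof (rule measure_eqI)
  show "sets (distr P (PiM {1..n} (\<lambda>_. borel)) Hvec) = sets Qm" by (simp add: sets_Qm)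
  fix Bs assume "Bs \<in> sets (distr P (PiM {1..n} (\<lambda>_. borel)) Hvec)"
  then have Bs: "Bs \<in> sets (PiM {1..n} (\<lambda>_. borel))" by simp
  have "emeasure (distr P (PiM {1..n} (\<lambda>_. borel)) Hvec) Bs = emeasure P (Hvec -` Bs \<inter> space P)"
    by (rule emeasure_distr[OF Hvec_meas Bs])
  also have "\<dots> = ennreal (measure Qm Bs)" by (simp add: emeasure_eq_measure Hprob[OF Bs])
  also have "\<dots> = emeasure Qm Bs" by (simp add: finite_measure.emeasure_eq_measure[OF prob_space.axioms(1)[OF Qm_prob]])
  finally show "emeasure (distr P (PiM {1..n} (\<lambda>_. borel)) Hvec) Bs = emeasure Qm Bs" .
qed

lemma marginal:
  assumes k: "k \<in> {1..n}" and B: "B \<in> sets borel"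
  shows "prob (H k -` B \<inter> space P) = measure (Exp_law (alpha k)) B"
proof -
  define B' where "B' j = (if j = k then B else UNIV)" for j
  have B': "\<And>j. B' j \<in> sets borel" using B unfolding B'_def by auto
  have "H k -` B \<inter> space P = {\<omega>\<in>space P. \<forall>j\<in>{1..n}. H j \<omega> \<in> B' j}" using k unfolding B'_def by auto
  then have "prob (H k -` B \<inter> space P) = (\<Prod>j=1..n. measure (Exp_law (alpha j)) (B' j))"
    using rect[OF B'] by simp
  also have "\<dots> = (\<Prod>j\<in>{1..n}. if j = k then measure (Exp_law (alpha k)) B else 1)"
  proof (intro prod.cong refl)
    fix j assume j: "j \<in> {1..n}"
    show "measure (Exp_law (alpha j)) (B' j) = (if j = k then measure (Exp_law (alpha k)) B else 1)"
      using prob_space.prob_space[OF prob_space_Exp_law[OF alpha_pos[OF j]]] unfolding B'_def by simp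
  qed
  also have "\<dots> = measure (Exp_law (alpha k)) B" using k by (simp add: prod.delta)
  finally show ?thesis .
qed

lemma distr_H: 
  assumes k: "k \<in> {1..n}"
  shows "distr P borel (H k) = ExL k" "distr P lborel (H k) = Exp_law (alpha k)"
proof -
  have pE: "prob_space (Exp_law (alpha k))" by (rule prob_space_Exp_law[OF alpha_pos[OF k]])
  have e: "emeasure P (H k -` B \<inter> space P) = emeasure (Exp_law (alpha k)) B" if "B \<in> sets borel" for B
    using marginal[OF k that] by (simp add: emeasure_eq_measure finite_measure.emeasure_eq_measure[OF prob_space.axioms(1)[OF pE]])
  show "distr P borel (H k) = ExL k"
    by (rule measure_eqI) (use k e in \<open>auto simp: emeasure_distr[OF Hm] ExL_def\<close>)
  show "distr P lborel (H k) = Exp_law (alpha k)"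
  proof (rule measure_eqI)
    fix B assume "B \<in> sets (distr P lborel (H k))"
    then have B: "B \<in> sets borel" by simp
    have Hl: "H k \<in> measurable P lborel" using Hm[of k] by simp
    show "emeasure (distr P lborel (H k)) B = emeasure (Exp_law (alpha k)) B"
      using e[OF B] emeasure_distr[OF Hl] B by simp
  qed simp
qed

end


context tcj begin

definition "Xvec \<omega> = (\<lambda>k\<in>{..n}. X k \<omega>)"

lemma Xvec_meas: "Xvec \<in> measurable P (PiM {..n} (\<lambda>_. count_space UNIV))"
  unfolding Xvec_def by (rule measurable_restrict) (rule Xm)

lemma Xvec_hist: "p \<in> paths n \<Longrightarrow> \<omega> \<in> hist P X n p \<Longrightarrow> Xvec \<omega> = p"
  unfolding Xvec_def hist_def paths_def by (auto simp: PiE_def extensional_def fun_eq_iff)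

lemma indep_HX:
  assumes Bs: "Bs \<in> sets (PiM {1..n} (\<lambda>_. borel))"
    and C: "C \<in> sets (PiM {..n} (\<lambda>_. count_space UNIV))"
  shows "prob ((Hvec -` Bs \<inter> space P) \<inter> (Xvec -` C \<inter> space P)) = prob (Hvec -` Bs \<inter> space P) * prob (Xvec -` C \<inter> space P)"
proof -
  have Hev: "Hvec -` Bs \<inter> space P \<in> events" by (rule measurable_sets[OF Hvec_meas Bs])
  have Fev: "Xvec -` C \<inter> space P \<in> events" by (rule measurable_sets[OF Xvec_meas C])
  let ?F = "Xvec -` C \<inter> space P"
  let ?G = "Hvec -` Bs \<inter> space P"
  have "prob (?G \<inter> ?F) = (\<Sum>p\<in>paths n. prob ((?G \<inter> ?F) \<inter> hist P X n p))"
    by (rule tot[OF order_refl sets.Int[OF Hev Fev]])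
  also have "\<dots> = (\<Sum>p\<in>paths n. measure Qm Bs * (if p \<in> C then prob (hist P X n p) else 0))"
  proof (intro sum.cong refl)
    fix p assume p: "p \<in> paths n"
    show "prob ((?G \<inter> ?F) \<inter> hist P X n p) = measure Qm Bs * (if p \<in> C then prob (hist P X n p) else 0)"
    proof (cases "p \<in> C")
      case True
      then have "(?G \<inter> ?F) \<inter> hist P X n p = hist P X n p \<inter> ?G"
        using Xvec_hist[OF p] unfolding hist_def by auto
      then show ?thesis using True hvec_cond[OF p Bs] by simp
    next
      case False
      then have "(?G \<inter> ?F) \<inter> hist P X n p = {}"
        using Xvec_hist[OF p] by auto
      then show ?thesis using False by simp
    qed
  qed
  also have "\<dots> = measure Qm Bs * (\<Sum>p\<in>paths n. prob (?F \<inter> hist P X n p))"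
  proof -
    have "(\<Sum>p\<in>paths n. prob (?F \<inter> hist P X n p)) = (\<Sum>p\<in>paths n. (if p \<in> C then prob (hist P X n p) else 0))"
    proof (intro sum.cong refl)
      fix p assume p: "p \<in> paths n"
      show "prob (?F \<inter> hist P X n p) = (if p \<in> C then prob (hist P X n p) else 0)"
      proof (cases "p \<in> C")
        case True
        then have "?F \<inter> hist P X n p = hist P X n p"
          using Xvec_hist[OF p] unfolding hist_def by auto
        then show ?thesis using True by simp
      next
        case False
        then have "?F \<inter> hist P X n p = {}" using Xvec_hist[OF p] by auto
        then show ?thesis using False by simp
      qed
    qed
    then show ?thesis by (simp add: sum_distrib_left)
  qed
  also have "\<dots> = prob ?G * prob ?F"
    using tot[OF order_refl Fev] Hprob[OF Bs] by simp
  finally show ?thesis .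
qed

lemma g_meas: "(\<lambda>h. \<lambda>k\<in>{..n}. \<Sum>m=1..k. h m) \<in> measurable (PiM {1..n} (\<lambda>_. borel)) (PiM {..n} (\<lambda>_. borel :: real measure))"
proof (rule measurable_restrict)
  fix k assume k: "k \<in> {..n}"
  have "(\<lambda>h. \<Sum>m\<in>{1..k}. (\<lambda>m h. h m :: real) m h) \<in> borel_measurable (PiM {1..n} (\<lambda>_. borel))"
  proof (rule borel_measurable_sum)
    fix m assume "m \<in> {1..k}"
    then have "m \<in> {1..n}" using k by auto
    then show "(\<lambda>h. h m :: real) \<in> borel_measurable (PiM {1..n} (\<lambda>_. borel))"
      by (rule measurable_component_singleton)
  qed
  then show "(\<lambda>h. \<Sum>m=1..k. h m :: real) \<in> borel_measurable (PiM {1..n} (\<lambda>_. borel))" by simp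
qed

lemma indep_TX:
  "indep_set (sets (vimage_algebra (space P) (\<lambda>\<omega>. \<lambda>k\<in>{..n}. \<Sum>m=1..k. H m \<omega>) (PiM {..n} (\<lambda>_. borel))))
     (sets (vimage_algebra (space P) (\<lambda>\<omega>. \<lambda>k\<in>{..n}. X k \<omega>) (PiM {..n} (\<lambda>_. count_space UNIV))))"
proof -
  let ?g = "\<lambda>h. \<lambda>k\<in>{..n}. \<Sum>m=1..k. h m :: real"
  let ?T = "\<lambda>\<omega>. \<lambda>k\<in>{..n}. \<Sum>m=1..k. H m \<omega>"
  have gH: "?T \<omega> = ?g (Hvec \<omega>)" for \<omega> unfolding Hvec_def by (auto simp: fun_eq_iff)
  have Tm: "?T \<in> measurable P (PiM {..n} (\<lambda>_. borel))"
    unfolding gH by (rule measurable_comp[OF Hvec_meas g_meas, unfolded comp_def])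
  have Xm': "(\<lambda>\<omega>. \<lambda>k\<in>{..n}. X k \<omega>) = Xvec" unfolding Xvec_def ..
  have s1: "sets (vimage_algebra (space P) ?T (PiM {..n} (\<lambda>_. borel))) = {?T -` A \<inter> space P | A. A \<in> sets (PiM {..n} (\<lambda>_. borel))}"
    by (rule sets_vimage_algebra2) (intro Pi_I, rule measurable_space[OF Tm])
  have s2: "sets (vimage_algebra (space P) Xvec (PiM {..n} (\<lambda>_. count_space UNIV))) = {Xvec -` A \<inter> space P | A. A \<in> sets (PiM {..n} (\<lambda>_. count_space UNIV))}"
    by (rule sets_vimage_algebra2) (intro Pi_I, rule measurable_space[OF Xvec_meas])
  show ?thesis unfolding Xm' s1 s2
  proof (rule indep_setI)
    show "{?T -` A \<inter> space P | A. A \<in> sets (PiM {..n} (\<lambda>_. borel))} \<subseteq> events"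
      using measurable_sets[OF Tm] by auto
    show "{Xvec -` A \<inter> space P | A. A \<in> sets (PiM {..n} (\<lambda>_. count_space UNIV))} \<subseteq> events"
      using measurable_sets[OF Xvec_meas] by auto
  next
    fix a b assume a: "a \<in> {?T -` A \<inter> space P | A. A \<in> sets (PiM {..n} (\<lambda>_. borel))}"
      and b: "b \<in> {Xvec -` A \<inter> space P | A. A \<in> sets (PiM {..n} (\<lambda>_. count_space UNIV))}"
    obtain D where D: "D \<in> sets (PiM {..n} (\<lambda>_. borel))" "a = ?T -` D \<inter> space P" using a by auto
    obtain C where C: "C \<in> sets (PiM {..n} (\<lambda>_. count_space UNIV))" "b = Xvec -` C \<inter> space P" using b by auto
    let ?Bs = "?g -` D \<inter> space (PiM {1..n} (\<lambda>_. borel))"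
    have Bs: "?Bs \<in> sets (PiM {1..n} (\<lambda>_. borel))" by (rule measurable_sets[OF g_meas D(1)])
    have "a = Hvec -` ?Bs \<inter> space P"
      unfolding D(2) gH using measurable_space[OF Hvec_meas] by auto
    then show "prob (a \<inter> b) = prob a * prob b" unfolding C(2) using indep_HX[OF Bs C(1)] by simp
  qed
qed

end


context tcj begin

lemma markov_part:
  assumes l: "l < n" and pos: "prob (hist P X l ss) > 0"
  shows "cond_prob P {\<omega> \<in> space P. X (Suc l) \<omega> = t} (hist P X l ss)
       = cond_prob P {\<omega> \<in> space P. X (Suc l) \<omega> = t} {\<omega> \<in> space P. X l \<omega> = ss l}"
proof -
  have "prob (hist P X l ss) \<le> prob {\<omega> \<in> space P. X l \<omega> = ss l}"
    by (rule finite_measure_mono) (auto simp: hist_def intro: Xev)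
  then have pos2: "prob {\<omega> \<in> space P. X l \<omega> = ss l} > 0" using pos by simp
  show ?thesis unfolding cond_prob_def using markov_step[OF l, of t ss] marg_step[OF l, of t "ss l"] pos pos2
    by simp
qed

lemma trans_part:
  assumes l: "l < n" and s: "length s = 2*n+1 - 2*l" "sum_list s = sum_list r"
    and pos: "prob {\<omega> \<in> space P. X l \<omega> = s} > 0"
  shows "cond_prob P {\<omega> \<in> space P. X (Suc l) \<omega> = t} {\<omega> \<in> space P. X l \<omega> = s}
       = coal_rate s t / alpha (Suc l)"
proof -
  have rl: "real (length s) = real (2*n+1) + 2 - 2 * real (Suc l)" using s l by (simp add: of_nat_diff)
  have ct: "coal_total s = alpha (Suc l)" unfolding coal_total_eq alpha_def rl s(2) by (simp add: algebra_simps)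
  show ?thesis unfolding cond_prob_def using marg_step[OF l, of t s] pos
    by (simp add: jump_prob_def ct)
qed

end

theorem proposition2p2:
  fixes P :: "'w measure" and r :: "real list" and n :: nat
    and X :: "nat \<Rightarrow> 'w \<Rightarrow> real list" and H :: "nat \<Rightarrow> 'w \<Rightarrow> real"
  defines "N \<equiv> 2 * n + 1"
  defines "M \<equiv> sum_list r"
  defines "T \<equiv> (\<lambda>k \<omega>. \<Sum>m=1..k. H m \<omega>)"
  defines "\<alpha> \<equiv> (\<lambda>k::nat. (M + real N + 2 - 2 * real k) * (real N + 1 - 2 * real k)
                          * (real N - 2 * real k) / 2)"
  assumes r_conf: "r \<in> Sdown_fin" and r_len: "length r = N"
    and coal: "ternary_coalescent_jump_hold P r n X H"
  shows
    "prob_space.indep_vars P (\<lambda>_. borel) H {1..n}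
     \<and> (\<forall>k\<in>{1..n}. distributed P lborel (H k) (exponential_density (\<alpha> k)))
     \<and> prob_space.indep_set P
         (sets (vimage_algebra (space P) (\<lambda>\<omega>. \<lambda>k\<in>{..n}. T k \<omega>) (Pi\<^sub>M {..n} (\<lambda>_. borel))))
         (sets (vimage_algebra (space P) (\<lambda>\<omega>. \<lambda>k\<in>{..n}. X k \<omega>) (Pi\<^sub>M {..n} (\<lambda>_. count_space UNIV))))
     \<and> (\<forall>l<n. \<forall>ss t. measure P (hist P X l ss) > 0 \<longrightarrow>
          cond_prob P {\<omega> \<in> space P. X (Suc l) \<omega> = t} (hist P X l ss)
          = cond_prob P {\<omega> \<in> space P. X (Suc l) \<omega> = t} {\<omega> \<in> space P. X l \<omega> = ss l})
     \<and> (\<forall>l<n. \<forall>s i j k. s \<in> Sdown_fin \<and> length s = N - 2 * l \<and> sum_list s = M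
            \<and> measure P {\<omega> \<in> space P. X l \<omega> = s} > 0 \<and> i < j \<and> j < k \<and> k < N - 2 * l \<longrightarrow>
          cond_prob P {\<omega> \<in> space P. X (Suc l) \<omega> = merge3 s i j k} {\<omega> \<in> space P. X l \<omega> = s}
          = (\<Sum>x\<in>{x \<in> triples s. merge3 s (fst x) (fst (snd x)) (snd (snd x)) = merge3 s i j k}.
               trate s x) / \<alpha> (Suc l))"
proof -
  have c: "prob_space P" "\<forall>k. X k \<in> measurable P (count_space UNIV)" "\<forall>k. H k \<in> borel_measurable P"
    "\<forall>\<omega>\<in>space P. X 0 \<omega> = r"
    "\<forall>l<n. \<forall>ss. measure P (hist P X (Suc l) ss) = measure P (hist P X l ss) * jump_prob (ss l) (ss (Suc l))"
    "\<forall>ss B. (\<forall>k. B k \<in> sets borel) \<longrightarrow>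
        measure P (hist P X n ss \<inter> {\<omega> \<in> space P. \<forall>k\<in>{1..n}. H k \<omega> \<in> B k})
          = measure P (hist P X n ss) * (\<Prod>k=1..n. measure (Exp_law (coal_total (ss (k - 1)))) (B k))"
    using coal unfolding ternary_coalescent_jump_hold_def by blast+
  interpret tcj P r n X H
  proof (intro tcj.intro tcj_axioms.intro c(1))
    show "\<forall>x\<in>set r. x > 0" using r_conf unfolding Sdown_fin_def by blast
  qed (use c r_len N_def in auto)
  have al: "\<alpha> = alpha" unfolding \<alpha>_def alpha_def M_def N_def by (rule refl)
  have p1: "indep_vars (\<lambda>_. borel) H {1..n}"
  proof (cases "n = 0")
    case True then show ?thesis by (simp add: indep_vars_def indep_sets_def)
  next
    case False
    then have ne: "{1..n} \<noteq> {}" by simp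
    have "distr P (PiM {1..n} (\<lambda>_. borel)) (\<lambda>x. \<lambda>i\<in>{1..n}. H i x) = PiM {1..n} (\<lambda>i. distr P borel (H i))"
    proof -
      have "distr P (PiM {1..n} (\<lambda>_. borel)) (\<lambda>x. \<lambda>i\<in>{1..n}. H i x) = Qm"
        using distr_Hvec unfolding Hvec_def .
      also have "Qm = PiM {1..n} (\<lambda>i. distr P borel (H i))"
        unfolding Qm_def by (rule PiM_cong) (simp_all add: distr_H(1))
      finally show ?thesis .
    qed
    then show ?thesis using indep_vars_iff_distr_eq_PiM[OF ne, where M'="\<lambda>_. borel" and X=H] Hm by simp
  qed
  have p2: "\<forall>k\<in>{1..n}. distributed P lborel (H k) (exponential_density (\<alpha> k))"
  proof
    fix k assume k: "k \<in> {1..n}"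
    show "distributed P lborel (H k) (exponential_density (\<alpha> k))"
      unfolding distributed_def al
      using distr_H(2)[OF k] Hm[of k] by (simp add: Exp_law_def)
  qed
  have p3: "indep_set
         (sets (vimage_algebra (space P) (\<lambda>\<omega>. \<lambda>k\<in>{..n}. T k \<omega>) (Pi\<^sub>M {..n} (\<lambda>_. borel))))
         (sets (vimage_algebra (space P) (\<lambda>\<omega>. \<lambda>k\<in>{..n}. X k \<omega>) (Pi\<^sub>M {..n} (\<lambda>_. count_space UNIV))))"
    unfolding T_def by (rule indep_TX)
  have p4: "\<forall>l<n. \<forall>ss t. measure P (hist P X l ss) > 0 \<longrightarrow>
          cond_prob P {\<omega> \<in> space P. X (Suc l) \<omega> = t} (hist P X l ss)
          = cond_prob P {\<omega> \<in> space P. X (Suc l) \<omega> = t} {\<omega> \<in> space P. X l \<omega> = ss l}"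
    using markov_part by blast
  have p5: "\<forall>l<n. \<forall>s i j k. s \<in> Sdown_fin \<and> length s = N - 2 * l \<and> sum_list s = M
            \<and> measure P {\<omega> \<in> space P. X l \<omega> = s} > 0 \<and> i < j \<and> j < k \<and> k < N - 2 * l \<longrightarrow>
          cond_prob P {\<omega> \<in> space P. X (Suc l) \<omega> = merge3 s i j k} {\<omega> \<in> space P. X l \<omega> = s}
          = (\<Sum>x\<in>{x \<in> triples s. merge3 s (fst x) (fst (snd x)) (snd (snd x)) = merge3 s i j k}.
               trate s x) / \<alpha> (Suc l)"
  proof (intro allI impI)
    fix l s i j k
    assume l: "l < n" and h: "s \<in> Sdown_fin \<and> length s = N - 2 * l \<and> sum_list s = M
            \<and> measure P {\<omega> \<in> space P. X l \<omega> = s} > 0 \<and> i < j \<and> j < k \<and> k < N - 2 * l"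
    show "cond_prob P {\<omega> \<in> space P. X (Suc l) \<omega> = merge3 s i j k} {\<omega> \<in> space P. X l \<omega> = s}
          = (\<Sum>x\<in>{x \<in> triples s. merge3 s (fst x) (fst (snd x)) (snd (snd x)) = merge3 s i j k}.
               trate s x) / \<alpha> (Suc l)"
      using trans_part[OF l, of s "merge3 s i j k"] h unfolding al coal_rate_def N_def M_def by simp
  qed
  show ?thesis using p1 p2 p3 p4 p5 by blast
qed


end
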